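(* Assume $y_2\ne0$ and $p_1\ne-1$. Then $\widetilde w_0=0$ in $\mathfrak B(V)$ if and only if $(\widetilde q_{12}q_{22}-1)(q_{22}+1)(q_{11}\widetilde q_{12}^{\,2}q_{22}+1)=0$.
   Context: $\Bbbk$ algebraically closed of characteristic $0$. $V$ is braided of diagonal type with basis $x_1,x_2$, $c(x_i\otimes x_j)=q_{ij}x_j\otimes x_i$, $q_{ij}\in\Bbbk^\times$, $q_{ii}\ne1$, $\widetilde q_{12}=q_{12}q_{21}$. $\mathfrak B(V)$ is the Nichols algebra, $\mathbb Z^2$-graded by $\deg x_i=\alpha_i$; $q_{\alpha\beta}$ is the bicharacter with $q_{\alpha_i\alpha_j}=q_{ij}$. $y_0=x_2$, $y_{k+1}=x_1y_k-q_{11}^kq_{12}y_kx_1$, $\beta_k=k\alpha_1+\alpha_2$, $p_k=q_{11}^{k^2}\widetilde q_{12}^{\,k}q_{22}$, $(n)_q=1+\dots+q^{n-1}$. $w_0=y_2y_0-q_{\beta_2\beta_0}y_0y_2$ and $\widetilde w_0=w_0-\dfrac{q_{\beta_1\beta_0}(2)_{q_{11}}(1-q_{11}\widetilde q_{12})}{1+p_1}y_1^2$. *)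

theory Defs
  imports "HOL-Computational_Algebra.Polynomial"
begin

text \<open>Tensor algebra T(V) of V with basis x_1, x_2, realised as noncommutative
 polynomials: functions from words (lists of indices) to coefficients.
 Only words over {1,2} are relevant; the elements built below are finitely supported.\<close>

type_synonym 'a ncp = "nat list \<Rightarrow> 'a"

definition nc_add :: "'a::field ncp \<Rightarrow> 'a ncp \<Rightarrow> 'a ncp" where
  "nc_add u v = (\<lambda>w. u w + v w)"

definition nc_smult :: "'a::field \<Rightarrow> 'a ncp \<Rightarrow> 'a ncp" where
  "nc_smult c u = (\<lambda>w. c * u w)"

definition nc_mult :: "'a::field ncp \<Rightarrow> 'a ncp \<Rightarrow> 'a ncp" where
  "nc_mult u v = (\<lambda>w. \<Sum>k\<le>length w. u (take k w) * v (drop k w))"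

definition nc_var :: "nat \<Rightarrow> 'a::field ncp" where
  "nc_var i = (\<lambda>w. if w = [i] then 1 else 0)"

text \<open>Skew derivation d_i of T(V) (diagonal braiding q i j = q_ij):
 d_i(x_j) = delta_ij, d_i(u v) = u d_i(v) + q_{alpha_i, deg v} d_i(u) v.\<close>

definition skew_der :: "(nat \<Rightarrow> nat \<Rightarrow> 'a::field) \<Rightarrow> nat \<Rightarrow> 'a ncp \<Rightarrow> 'a ncp" where
  "skew_der q i u = (\<lambda>w. \<Sum>k\<le>length w.
      u (take k w @ i # drop k w) * prod_list (map (q i) (drop k w)))"

text \<open>u is zero in the Nichols algebra B(V) = T(V)/I(V) iff u lies in the radical
 of the canonical pairing, i.e. every iterated skew derivative of u has zero
 constant term.\<close>

definition nichols_zero :: "(nat \<Rightarrow> nat \<Rightarrow> 'a::field) \<Rightarrow> 'a ncp \<Rightarrow> bool" where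
  "nichols_zero q u \<longleftrightarrow> (\<forall>s. foldr (skew_der q) s u [] = 0)"

text \<open>Bicharacter on Z^2 (here N^2 suffices): q_{alpha beta}, with q_{alpha_i alpha_j} = q_ij.\<close>
definition qbi :: "(nat \<Rightarrow> nat \<Rightarrow> 'a::field) \<Rightarrow> nat \<times> nat \<Rightarrow> nat \<times> nat \<Rightarrow> 'a" where
  "qbi q a b = q 1 1 ^ (fst a * fst b) * q 1 2 ^ (fst a * snd b)
              * q 2 1 ^ (snd a * fst b) * q 2 2 ^ (snd a * snd b)"

definition beta :: "nat \<Rightarrow> nat \<times> nat" where
  "beta k = (k, 1)"

definition qt12 :: "(nat \<Rightarrow> nat \<Rightarrow> 'a::field) \<Rightarrow> 'a" where
  "qt12 q = q 1 2 * q 2 1"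

definition pk :: "(nat \<Rightarrow> nat \<Rightarrow> 'a::field) \<Rightarrow> nat \<Rightarrow> 'a" where
  "pk q k = q 1 1 ^ (k^2) * qt12 q ^ k * q 2 2"

definition qnum :: "nat \<Rightarrow> 'a::field \<Rightarrow> 'a" where
  "qnum n t = (\<Sum>i<n. t ^ i)"

fun yk :: "(nat \<Rightarrow> nat \<Rightarrow> 'a::field) \<Rightarrow> nat \<Rightarrow> 'a ncp" where
  "yk q 0 = nc_var 2"
| "yk q (Suc k) = nc_add (nc_mult (nc_var 1) (yk q k))
       (nc_smult (- (q 1 1 ^ k * q 1 2)) (nc_mult (yk q k) (nc_var 1)))"

definition w0 :: "(nat \<Rightarrow> nat \<Rightarrow> 'a::field) \<Rightarrow> 'a ncp" where
  "w0 q = nc_add (nc_mult (yk q 2) (yk q 0))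
            (nc_smult (- qbi q (beta 2) (beta 0)) (nc_mult (yk q 0) (yk q 2)))"

definition w0_tilde :: "(nat \<Rightarrow> nat \<Rightarrow> 'a::field) \<Rightarrow> 'a ncp" where
  "w0_tilde q = nc_add (w0 q)
     (nc_smult (- (qbi q (beta 1) (beta 0) * qnum 2 (q 1 1) * (1 - q 1 1 * qt12 q)
                   / (1 + pk q 1)))
               (nc_mult (yk q 1) (yk q 1)))"

end

theory Submission
  imports Defs "HOL-Library.Multiset"
begin

lemma sum_atMost_list: "(\<Sum>k\<le>n. f k) = (\<Sum>k\<leftarrow>[0..<Suc n]. f k)"
  by (metis atMost_upto distinct_upt sum_list_distinct_conv_sum_set)

lemma fpt_Cons: "foldr (skew_der q) (i#s) u w = (\<Sum>k\<leftarrow>[0..<Suc (length w)]. foldr (skew_der q) s u (take k w @ i # drop k w) * prod_list (map (q i) (drop k w)))"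
  by (simp add: skew_der_def sum_atMost_list)
lemma fpt_Nil: "foldr (skew_der q) [] u w = u w" by simp

lemma mult_var_left:
  "nc_mult (nc_var i) (u::'a::field ncp) w = (case w of [] \<Rightarrow> 0 | a#w' \<Rightarrow> if a = i then u w' else 0)"
proof (cases w)
  case Nil then show ?thesis by (simp add: nc_mult_def nc_var_def)
next
  case (Cons a w')
  have "nc_mult (nc_var i) u w = (\<Sum>k\<le>Suc (length w'). nc_var i (take k w) * u (drop k w))"
    by (simp add: nc_mult_def Cons)
  also have "\<dots> = nc_var i (take 0 w) * u (drop 0 w) + (\<Sum>k\<le>length w'. nc_var i (take (Suc k) w) * u (drop (Suc k) w))"
    by (rule sum.atMost_Suc_shift)
  also have "(\<Sum>k\<le>length w'. nc_var i (take (Suc k) w) * u (drop (Suc k) w)) = (\<Sum>k\<le>length w'. if k = 0 then (if a = i then u w' else 0) else 0)"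
    by (rule sum.cong) (auto simp: nc_var_def Cons)
  finally show ?thesis by (simp add: Cons nc_var_def)
qed

lemma mult_var_right:
  "nc_mult (u::'a::field ncp) (nc_var i) w = (if w \<noteq> [] \<and> last w = i then u (butlast w) else 0)"
proof (cases w rule: rev_cases)
  case Nil then show ?thesis by (simp add: nc_mult_def nc_var_def)
next
  case (snoc w' a)
  have "nc_mult u (nc_var i) w = (\<Sum>k\<le>Suc (length w'). u (take k w) * nc_var i (drop k w))"
    by (simp add: nc_mult_def snoc)
  also have "\<dots> = (\<Sum>k\<le>length w'. u (take k w) * nc_var i (drop k w)) + u (take (Suc (length w')) w) * nc_var i (drop (Suc (length w')) w)"
    by (rule sum.atMost_Suc)
  also have "(\<Sum>k\<le>length w'. u (take k w) * nc_var i (drop k w)) =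
      (\<Sum>k\<le>length w'. if k = length w' then (if a = i then u w' else 0) else 0)"
    by (rule sum.cong) (auto simp: nc_var_def snoc)
  finally show ?thesis by (simp add: snoc nc_var_def)
qed

lemma y1_unf: "yk q 1 = nc_add (nc_mult (nc_var 1) (nc_var 2)) (nc_smult (- q 1 2) (nc_mult (nc_var 2) (nc_var 1)))"
  by simp
lemma y2_unf: "yk q 2 = nc_add (nc_mult (nc_var 1) (yk q 1)) (nc_smult (- (q 1 1 * q 1 2)) (nc_mult (yk q 1) (nc_var 1)))"
  by (simp add: numeral_2_eq_2)
lemmas ev = mult_var_left mult_var_right nc_add_def nc_smult_def y1_unf y2_unf

definition cc :: "(nat \<Rightarrow> nat \<Rightarrow> 'a::field) \<Rightarrow> 'a" where
  "cc q = qbi q (beta 1) (beta 0) * qnum 2 (q 1 1) * (1 - q 1 1 * qt12 q) / (1 + pk q 1)"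

lemma cc_mult: "1 + pk q 1 \<noteq> 0 \<Longrightarrow> cc q * (1 + q (Suc 0) (Suc 0) * (q (Suc 0) 2 * q 2 (Suc 0)) * q 2 2) = q (Suc 0) 2 * q 2 2 * (1 + q (Suc 0) (Suc 0)) * (1 - q (Suc 0) (Suc 0) * (q (Suc 0) 2 * q 2 (Suc 0)))"
  by (simp add: cc_def qbi_def beta_def qnum_def qt12_def pk_def numeral_2_eq_2)

definition Y2 :: "(nat \<Rightarrow> nat \<Rightarrow> 'a::field) \<Rightarrow> 'a" where
  "Y2 q = (1 + q 1 1) * (1 - q 1 2 * q 2 1) * (1 - q 1 1 * (q 1 2 * q 2 1))"

definition R1122 :: "(nat \<Rightarrow> nat \<Rightarrow> 'a::field) \<Rightarrow> 'a" where
  "R1122 q = - ((q 1 2 * q 2 1 * q 2 2 - 1) * (q 2 2 + 1) * (q 1 1 * (q 1 2 * q 2 1) ^ 2 * q 2 2 + 1)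
      * ((1 + q 1 1) * (1 - q 1 2 * q 2 1) * (1 - q 1 1 * (q 1 2 * q 2 1))))"

lemma pk1: "pk q (Suc 0) = q 1 1 * (q 1 2 * q 2 1) * q 2 2"
  by (simp add: pk_def qt12_def)

lemma w0v1122: "w0 (q::nat\<Rightarrow>nat\<Rightarrow>'a::field) [Suc 0, Suc 0, 2, 2] = 1"
  by (simp add: w0_def ev qbi_def beta_def; simp add: nc_var_def eval_nat_numeral algebra_simps)
lemma y11v1122: "nc_mult (yk (q::nat\<Rightarrow>nat\<Rightarrow>'a::field) (Suc 0)) (yk q (Suc 0)) [Suc 0, Suc 0, 2, 2] = 0"
  by (simp add: nc_mult_def sum_atMost_list upt_rec ev; simp add: nc_var_def eval_nat_numeral algebra_simps)
lemma Wv1122: "w0_tilde (q::nat\<Rightarrow>nat\<Rightarrow>'a::field) [Suc 0, Suc 0, 2, 2] = w0 q [Suc 0, Suc 0, 2, 2] - cc q * nc_mult (yk q (Suc 0)) (yk q (Suc 0)) [Suc 0, Suc 0, 2, 2]"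
  by (simp add: w0_tilde_def cc_def nc_add_def nc_smult_def)
lemma w0v1212: "w0 (q::nat\<Rightarrow>nat\<Rightarrow>'a::field) [Suc 0, 2, Suc 0, 2] = 0 - q 1 2 - q 1 1 * q 1 2"
  by (simp add: w0_def ev qbi_def beta_def; simp add: nc_var_def eval_nat_numeral algebra_simps)
lemma y11v1212: "nc_mult (yk (q::nat\<Rightarrow>nat\<Rightarrow>'a::field) (Suc 0)) (yk q (Suc 0)) [Suc 0, 2, Suc 0, 2] = 1"
  by (simp add: nc_mult_def sum_atMost_list upt_rec ev; simp add: nc_var_def eval_nat_numeral algebra_simps)
lemma Wv1212: "w0_tilde (q::nat\<Rightarrow>nat\<Rightarrow>'a::field) [Suc 0, 2, Suc 0, 2] = w0 q [Suc 0, 2, Suc 0, 2] - cc q * nc_mult (yk q (Suc 0)) (yk q (Suc 0)) [Suc 0, 2, Suc 0, 2]"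
  by (simp add: w0_tilde_def cc_def nc_add_def nc_smult_def)
lemma w0v1221: "w0 (q::nat\<Rightarrow>nat\<Rightarrow>'a::field) [Suc 0, 2, 2, Suc 0] = 0"
  by (simp add: w0_def ev qbi_def beta_def; simp add: nc_var_def eval_nat_numeral algebra_simps)
lemma y11v1221: "nc_mult (yk (q::nat\<Rightarrow>nat\<Rightarrow>'a::field) (Suc 0)) (yk q (Suc 0)) [Suc 0, 2, 2, Suc 0] = 0 - q 1 2"
  by (simp add: nc_mult_def sum_atMost_list upt_rec ev; simp add: nc_var_def eval_nat_numeral algebra_simps)
lemma Wv1221: "w0_tilde (q::nat\<Rightarrow>nat\<Rightarrow>'a::field) [Suc 0, 2, 2, Suc 0] = w0 q [Suc 0, 2, 2, Suc 0] - cc q * nc_mult (yk q (Suc 0)) (yk q (Suc 0)) [Suc 0, 2, 2, Suc 0]"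
  by (simp add: w0_tilde_def cc_def nc_add_def nc_smult_def)
lemma w0v2112: "w0 (q::nat\<Rightarrow>nat\<Rightarrow>'a::field) [2, Suc 0, Suc 0, 2] = 0 - q 1 2 ^ 2 * q 2 2 + q 1 1 * q 1 2 ^ 2"
  by (simp add: w0_def ev qbi_def beta_def; simp add: nc_var_def eval_nat_numeral algebra_simps)
lemma y11v2112: "nc_mult (yk (q::nat\<Rightarrow>nat\<Rightarrow>'a::field) (Suc 0)) (yk q (Suc 0)) [2, Suc 0, Suc 0, 2] = 0 - q 1 2"
  by (simp add: nc_mult_def sum_atMost_list upt_rec ev; simp add: nc_var_def eval_nat_numeral algebra_simps)
lemma Wv2112: "w0_tilde (q::nat\<Rightarrow>nat\<Rightarrow>'a::field) [2, Suc 0, Suc 0, 2] = w0 q [2, Suc 0, Suc 0, 2] - cc q * nc_mult (yk q (Suc 0)) (yk q (Suc 0)) [2, Suc 0, Suc 0, 2]"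
  by (simp add: w0_tilde_def cc_def nc_add_def nc_smult_def)
lemma w0v2121: "w0 (q::nat\<Rightarrow>nat\<Rightarrow>'a::field) [2, Suc 0, 2, Suc 0] = q 1 2 ^ 3 * q 2 2 + q 1 1 * q 1 2 ^ 3 * q 2 2"
  by (simp add: w0_def ev qbi_def beta_def; simp add: nc_var_def eval_nat_numeral algebra_simps)
lemma y11v2121: "nc_mult (yk (q::nat\<Rightarrow>nat\<Rightarrow>'a::field) (Suc 0)) (yk q (Suc 0)) [2, Suc 0, 2, Suc 0] = q 1 2 ^ 2"
  by (simp add: nc_mult_def sum_atMost_list upt_rec ev; simp add: nc_var_def eval_nat_numeral algebra_simps)
lemma Wv2121: "w0_tilde (q::nat\<Rightarrow>nat\<Rightarrow>'a::field) [2, Suc 0, 2, Suc 0] = w0 q [2, Suc 0, 2, Suc 0] - cc q * nc_mult (yk q (Suc 0)) (yk q (Suc 0)) [2, Suc 0, 2, Suc 0]"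
  by (simp add: w0_tilde_def cc_def nc_add_def nc_smult_def)
lemma w0v2211: "w0 (q::nat\<Rightarrow>nat\<Rightarrow>'a::field) [2, 2, Suc 0, Suc 0] = 0 - q 1 1 * q 1 2 ^ 4 * q 2 2"
  by (simp add: w0_def ev qbi_def beta_def; simp add: nc_var_def eval_nat_numeral algebra_simps)
lemma y11v2211: "nc_mult (yk (q::nat\<Rightarrow>nat\<Rightarrow>'a::field) (Suc 0)) (yk q (Suc 0)) [2, 2, Suc 0, Suc 0] = 0"
  by (simp add: nc_mult_def sum_atMost_list upt_rec ev; simp add: nc_var_def eval_nat_numeral algebra_simps)
lemma Wv2211: "w0_tilde (q::nat\<Rightarrow>nat\<Rightarrow>'a::field) [2, 2, Suc 0, Suc 0] = w0 q [2, 2, Suc 0, Suc 0] - cc q * nc_mult (yk q (Suc 0)) (yk q (Suc 0)) [2, 2, Suc 0, Suc 0]"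
  by (simp add: w0_tilde_def cc_def nc_add_def nc_smult_def)
lemmas Wv = Wv1122 w0v1122 y11v1122 Wv1212 w0v1212 y11v1212 Wv1221 w0v1221 y11v1221 Wv2112 w0v2112 y11v2112 Wv2121 w0v2121 y11v2121 Wv2211 w0v2211 y11v2211
lemma y2v112: "yk (q::nat\<Rightarrow>nat\<Rightarrow>'a::field) 2 [Suc 0, Suc 0, 2] = 1"
  by (simp add: ev; simp add: nc_var_def eval_nat_numeral algebra_simps)
lemma y2v121: "yk (q::nat\<Rightarrow>nat\<Rightarrow>'a::field) 2 [Suc 0, 2, Suc 0] = 0 - q 1 2 - q 1 1 * q 1 2"
  by (simp add: ev; simp add: nc_var_def eval_nat_numeral algebra_simps)
lemma y2v211: "yk (q::nat\<Rightarrow>nat\<Rightarrow>'a::field) 2 [2, Suc 0, Suc 0] = q 1 1 * q 1 2 ^ 2"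
  by (simp add: ev; simp add: nc_var_def eval_nat_numeral algebra_simps)
lemmas y2v = y2v112 y2v121 y2v211
lemma FW1122: assumes nz: "1 + pk (q::nat\<Rightarrow>nat\<Rightarrow>'a::field) 1 \<noteq> 0" shows "(1 + pk q 1) * foldr (skew_der q) [1, 1, 2, 2] (w0_tilde q) [] = R1122 q"
proof -
  note hc = cc_mult[OF nz]
  show ?thesis
    apply (simp del: foldr.simps foldr_Cons mult_eq_0_iff yk.simps add: fpt_Cons fpt_Nil upt_rec Wv)
    using hc unfolding R1122_def pk1 unfolding One_nat_def by algebra
qed
lemma FW1212: assumes nz: "1 + pk (q::nat\<Rightarrow>nat\<Rightarrow>'a::field) 1 \<noteq> 0" shows "(1 + pk q 1) * foldr (skew_der q) [1, 2, 1, 2] (w0_tilde q) [] = 0"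
proof -
  note hc = cc_mult[OF nz]
  show ?thesis
    apply (simp del: foldr.simps foldr_Cons mult_eq_0_iff yk.simps add: fpt_Cons fpt_Nil upt_rec Wv)
    using hc unfolding R1122_def pk1 unfolding One_nat_def by algebra
qed
lemma FW1221: assumes nz: "1 + pk (q::nat\<Rightarrow>nat\<Rightarrow>'a::field) 1 \<noteq> 0" shows "(1 + pk q 1) * foldr (skew_der q) [1, 2, 2, 1] (w0_tilde q) [] = 0"
proof -
  note hc = cc_mult[OF nz]
  show ?thesis
    apply (simp del: foldr.simps foldr_Cons mult_eq_0_iff yk.simps add: fpt_Cons fpt_Nil upt_rec Wv)
    unfolding One_nat_def by algebra
qed
lemma FW2112: assumes nz: "1 + pk (q::nat\<Rightarrow>nat\<Rightarrow>'a::field) 1 \<noteq> 0" shows "(1 + pk q 1) * foldr (skew_der q) [2, 1, 1, 2] (w0_tilde q) [] = 0"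
proof -
  note hc = cc_mult[OF nz]
  show ?thesis
    apply (simp del: foldr.simps foldr_Cons mult_eq_0_iff yk.simps add: fpt_Cons fpt_Nil upt_rec Wv)
    unfolding One_nat_def by algebra
qed
lemma FW2121: assumes nz: "1 + pk (q::nat\<Rightarrow>nat\<Rightarrow>'a::field) 1 \<noteq> 0" shows "(1 + pk q 1) * foldr (skew_der q) [2, 1, 2, 1] (w0_tilde q) [] = 0"
proof -
  note hc = cc_mult[OF nz]
  show ?thesis
    apply (simp del: foldr.simps foldr_Cons mult_eq_0_iff yk.simps add: fpt_Cons fpt_Nil upt_rec Wv)
    unfolding One_nat_def by algebra
qed
lemma FW2211: assumes nz: "1 + pk (q::nat\<Rightarrow>nat\<Rightarrow>'a::field) 1 \<noteq> 0" shows "(1 + pk q 1) * foldr (skew_der q) [2, 2, 1, 1] (w0_tilde q) [] = 0"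
proof -
  note hc = cc_mult[OF nz]
  show ?thesis
    apply (simp del: foldr.simps foldr_Cons mult_eq_0_iff yk.simps add: fpt_Cons fpt_Nil upt_rec Wv)
    unfolding One_nat_def by algebra
qed
lemma FY112: "foldr (skew_der q) [1, 1, 2] (yk (q::nat\<Rightarrow>nat\<Rightarrow>'a::field) 2) [] = Y2 q"
  apply (simp del: foldr.simps foldr_Cons yk.simps add: fpt_Cons fpt_Nil upt_rec y2v)
  unfolding Y2_def One_nat_def by algebra
lemma FY121: "foldr (skew_der q) [1, 2, 1] (yk (q::nat\<Rightarrow>nat\<Rightarrow>'a::field) 2) [] = 0"
  apply (simp del: foldr.simps foldr_Cons yk.simps add: fpt_Cons fpt_Nil upt_rec y2v)
  unfolding Y2_def One_nat_def by algebra
lemma FY211: "foldr (skew_der q) [2, 1, 1] (yk (q::nat\<Rightarrow>nat\<Rightarrow>'a::field) 2) [] = 0"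
  apply (simp del: foldr.simps foldr_Cons yk.simps add: fpt_Cons fpt_Nil upt_rec y2v)
  unfolding Y2_def One_nat_def by algebra

definition hom :: "nat multiset \<Rightarrow> 'a::field ncp \<Rightarrow> bool" where
  "hom M u \<longleftrightarrow> (\<forall>w. u w \<noteq> 0 \<longrightarrow> mset w = M)"

lemma hom_var: "hom {#i#} (nc_var i :: 'a::field ncp)"
  by (simp add: hom_def nc_var_def)

lemma hom_add: "hom M u \<Longrightarrow> hom M v \<Longrightarrow> hom M (nc_add u v)"
  unfolding hom_def nc_add_def by (metis add.left_neutral add.right_neutral)

lemma hom_smult: "hom M u \<Longrightarrow> hom M (nc_smult c u)"
  by (auto simp: hom_def nc_smult_def)

lemma hom_mult: assumes "hom M u" "hom N v" "M + N = K" shows "hom K (nc_mult u v)"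
  unfolding hom_def
proof (intro allI impI)
  fix w assume "nc_mult u v w \<noteq> 0"
  then obtain k where "u (take k w) * v (drop k w) \<noteq> 0"
    unfolding nc_mult_def by (meson sum.not_neutral_contains_not_neutral)
  then have "u (take k w) \<noteq> 0" "v (drop k w) \<noteq> 0" by auto
  then have "mset (take k w) = M" "mset (drop k w) = N" using assms by (auto simp: hom_def)
  then have "mset (take k w @ drop k w) = K" using assms(3) by (simp only: mset_append)
  then show "mset w = K" by simp
qed

lemma vanish: assumes "hom M u"
  shows "mset s + mset v \<noteq> M \<Longrightarrow> foldr (skew_der q) s u v = 0"
proof (induction s arbitrary: v)
  case Nil
  then show ?case using assms by (auto simp: hom_def)
next
  case (Cons i s)
  have "foldr (skew_der q) s u (take k v @ i # drop k v) = 0" for k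
  proof (rule Cons.IH)
    have "mset (take k v @ i # drop k v) = add_mset i (mset (take k v) + mset (drop k v))" by simp
    also have "mset (take k v) + mset (drop k v) = mset v" by (metis append_take_drop_id mset_append)
    finally show "mset s + mset (take k v @ i # drop k v) \<noteq> M" using Cons.prems by simp
  qed
  then show ?case by (simp del: foldr.simps foldr_Cons add: fpt_Cons)
qed

lemma hom_y1: "hom {#1,2#} (yk q 1 :: 'a::field ncp)"
  unfolding y1_unf
  by (intro hom_add hom_smult hom_mult[OF hom_var hom_var]) (auto simp: add_mset_commute)

lemma hom_y2: "hom {#1,1,2#} (yk q 2 :: 'a::field ncp)"
  unfolding y2_unf
  by (intro hom_add hom_smult hom_mult[OF hom_var hom_y1] hom_mult[OF hom_y1 hom_var]) (auto simp: add_mset_commute)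

lemma hom_W: "hom {#1,1,2,2#} (w0_tilde q :: 'a::field ncp)"
proof -
  have a: "hom {#1,1,2,2#} (nc_mult (yk q 2) (nc_var 2) :: 'a ncp)"
    by (rule hom_mult[OF hom_y2 hom_var]) (simp add: add_mset_commute)
  have b: "hom {#1,1,2,2#} (nc_mult (nc_var 2) (yk q 2) :: 'a ncp)"
    by (rule hom_mult[OF hom_var hom_y2]) (simp add: add_mset_commute)
  have c: "hom {#1,1,2,2#} (nc_mult (yk q 1) (yk q 1) :: 'a ncp)"
    by (rule hom_mult[OF hom_y1 hom_y1]) (simp add: add_mset_commute)
  show ?thesis
    unfolding w0_tilde_def w0_def yk.simps(1)
    by (intro hom_add hom_smult a b c)
qed

lemma perm4:
  assumes "mset (s::nat list) = {#1,1,2,2#}"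
  shows "s = [1,1,2,2] \<or> s = [1,2,1,2] \<or> s = [1,2,2,1] \<or> s = [2,1,1,2] \<or> s = [2,1,2,1] \<or> s = [2,2,1,1]"
proof -
  have len: "length s = 4" using arg_cong[OF assms, of size] by simp
  have sub: "set s \<subseteq> {1,2}" using arg_cong[OF assms, of set_mset] by simp
  have c1: "count (mset s) 1 = 2" using assms by simp
  have c2: "count (mset s) 2 = 2" using assms by simp
  from len obtain a b c d where s: "s = [a,b,c,d]"
    by (auto simp: numeral_eq_Suc length_Suc_conv)
  have "a \<in> {1,2}" "b \<in> {1,2}" "c \<in> {1,2}" "d \<in> {1,2}" using sub s by auto
  then show ?thesis using c1 c2 unfolding s by auto
qed

lemma perm3:
  assumes "mset (s::nat list) = {#1,1,2#}"
  shows "s = [1,1,2] \<or> s = [1,2,1] \<or> s = [2,1,1]"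
proof -
  have len: "length s = 3" using arg_cong[OF assms, of size] by simp
  have sub: "set s \<subseteq> {1,2}" using arg_cong[OF assms, of set_mset] by simp
  have c1: "count (mset s) 1 = 2" using assms by simp
  have c2: "count (mset s) 2 = 1" using assms by simp
  from len obtain a b c where s: "s = [a,b,c]"
    by (auto simp: numeral_eq_Suc length_Suc_conv)
  have "a \<in> {1,2}" "b \<in> {1,2}" "c \<in> {1,2}" using sub s by auto
  then show ?thesis using c1 c2 unfolding s by auto
qed


lemma R1122_fact: "R1122 q = - (((qt12 q * q 2 2 - 1) * (q 2 2 + 1) * (q 1 1 * qt12 q ^ 2 * q 2 2 + 1)) * Y2 q)"
  by (simp add: R1122_def Y2_def qt12_def mult.assoc)

lemma Y2_nz:
  fixes q :: "nat \<Rightarrow> nat \<Rightarrow> 'a::field"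
  assumes "\<not> nichols_zero q (yk q 2)"
  shows "Y2 q \<noteq> 0"
proof
  assume Y: "Y2 q = 0"
  have "foldr (skew_der q) s (yk q 2) [] = 0" for s
  proof (cases "mset s = {#1,1,2#}")
    case True
    from perm3[OF True] show ?thesis
      by (elim disjE) (simp only: FY112 FY121 FY211 Y)+
  next
    case False
    then show ?thesis using vanish[OF hom_y2, of s "[]"] by simp
  qed
  then show False using assms unfolding nichols_zero_def by blast
qed

theorem lemma4:
  fixes q :: "nat \<Rightarrow> nat \<Rightarrow> 'a::{alg_closed_field, field_char_0}"
  assumes "\<forall>i\<in>{1,2}. \<forall>j\<in>{1,2}. q i j \<noteq> 0"
    and "q 1 1 \<noteq> 1" and "q 2 2 \<noteq> 1"
    and "\<not> nichols_zero q (yk q 2)"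
    and "pk q 1 \<noteq> -1"
  shows "nichols_zero q (w0_tilde q) \<longleftrightarrow>
    (qt12 q * q 2 2 - 1) * (q 2 2 + 1) * (q 1 1 * qt12 q ^ 2 * q 2 2 + 1) = 0"
proof -
  have nz: "1 + pk q 1 \<noteq> 0"
  proof
    assume "1 + pk q 1 = 0"
    then have "pk q 1 = -1" by (simp add: eq_neg_iff_add_eq_0 add.commute)
    with assms(5) show False by simp
  qed
  have Y: "Y2 q \<noteq> 0" using Y2_nz[OF assms(4)] .
  have others: "foldr (skew_der q) s (w0_tilde q) [] = 0"
    if "s = [1,2,1,2] \<or> s = [1,2,2,1] \<or> s = [2,1,1,2] \<or> s = [2,1,2,1] \<or> s = [2,2,1,1]" for s
    using that FW1212[OF nz] FW1221[OF nz] FW2112[OF nz] FW2121[OF nz] FW2211[OF nz] nz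
    by (elim disjE) (simp only: mult_eq_0_iff, blast)+
  have "nichols_zero q (w0_tilde q) \<longleftrightarrow> foldr (skew_der q) [1,1,2,2] (w0_tilde q) [] = 0"
  proof
    assume "nichols_zero q (w0_tilde q)"
    then show "foldr (skew_der q) [1,1,2,2] (w0_tilde q) [] = 0" unfolding nichols_zero_def by blast
  next
    assume h: "foldr (skew_der q) [1,1,2,2] (w0_tilde q) [] = 0"
    have "foldr (skew_der q) s (w0_tilde q) [] = 0" for s
    proof (cases "mset s = {#1,1,2,2#}")
      case True
      then show ?thesis using perm4[OF True] h others by blast
    next
      case False
      then show ?thesis using vanish[OF hom_W, of s "[]"] by simp
    qed
    then show "nichols_zero q (w0_tilde q)" unfolding nichols_zero_def by blast
  qed
  also have "\<dots> \<longleftrightarrow> R1122 q = 0"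
    using FW1122[OF nz] nz by (metis mult_eq_0_iff)
  also have "\<dots> \<longleftrightarrow> (qt12 q * q 2 2 - 1) * (q 2 2 + 1) * (q 1 1 * qt12 q ^ 2 * q 2 2 + 1) = 0"
    unfolding R1122_fact using Y by simp
  finally show ?thesis .
qed
end
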